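(* There are exactly $240$ special Sudoku grids over $\mathbb{Z}_5$. Moreover, there is a special Sudoku grid $S_0$ over $\mathbb{Z}_5$ such that every special Sudoku grid over $\mathbb{Z}_5$ is equivalent to $S_0$ up to relabeling and reflection, i.e. it is obtained from $S_0$ or from $s(S_0)$ by a relabeling of symbols.
   Context: Work in $\mathbb{Z}_5^2$ with Lee distance $d_L(\mathbf{u},\mathbf{v})=\sum_i\min\{w_i,5-w_i\}$, $\mathbf{w}=\mathbf{u}-\mathbf{v}$. A $(2,5,3)$ perfect code over $\mathbb{Z}_5$ is a set $\mathcal{C}=\{\mathbf{c}_1,\dots,\mathbf{c}_5\}\subseteq\mathbb{Z}_5^2$ with minimum Lee distance $3$ (so the Lee balls of radius $1$, each of size $5$, around the codewords partition $\mathbb{Z}_5^2$). Its palette grid $\mathcal{I}_\mathcal{C}$ is the $5\times5$ array (rows/columns indexed by $\mathbb{Z}_5$) with entry $i$ at every position in the radius-1 ball around $\mathbf{c}_i$. A perfect Sudoku grid with respect to $\mathcal{C}$ is a Latin square of order $5$ on $\{1,\dots,5\}$ orthogonal to $\mathcal{I}_\mathcal{C}$ (all $25$ ordered pairs of corresponding entries distinct). A special Sudoku grid over $\mathbb{Z}_5$ is a $5\times5$ array that is a perfect Sudoku grid with respect to every $(2,5,3)$ perfect code over $\mathbb{Z}_5$. Relabeling applies a bijection of $\{1,\dots,5\}$ to all entries; the reflection is $(s(A))_{i,j}=A_{i,4-j}$. *)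

theory Defs
  imports Main "HOL-Library.Numeral_Type"
begin

text \<open>The ring Z_5 is the numeral type 5 (arithmetic mod 5).
  Points of Z_5^2 are pairs; a 5x5 grid has rows/columns indexed by Z_5 and
  entries (symbols) in nat, meant to lie in {1..5}.\<close>

type_synonym grid = "5 \<Rightarrow> 5 \<Rightarrow> nat"

definition val5 :: "5 \<Rightarrow> nat" where
  "val5 w = nat (Rep_bit1 w)"   \<comment> \<open>canonical representative in {0..4}\<close>

definition lee_wt :: "5 \<Rightarrow> nat" where
  "lee_wt w = min (val5 w) (5 - val5 w)"

definition lee_dist :: "5 \<times> 5 \<Rightarrow> 5 \<times> 5 \<Rightarrow> nat" where
  "lee_dist u v = lee_wt (fst u - fst v) + lee_wt (snd u - snd v)"

text \<open>A (2,5,3) perfect code, given as its list of codewords c_1..c_5 (function on {1..5}).\<close>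
definition perfect_code :: "(nat \<Rightarrow> 5 \<times> 5) \<Rightarrow> bool" where
  "perfect_code c \<longleftrightarrow>
     (\<forall>i\<in>{1..5}. \<forall>j\<in>{1..5}. i \<noteq> j \<longrightarrow> lee_dist (c i) (c j) \<ge> 3) \<and>
     (\<exists>i\<in>{1..5}. \<exists>j\<in>{1..5}. i \<noteq> j \<and> lee_dist (c i) (c j) = 3)"

definition palette :: "(nat \<Rightarrow> 5 \<times> 5) \<Rightarrow> grid" where
  "palette c x y = (THE i. i \<in> {1..5} \<and> lee_dist (x, y) (c i) \<le> 1)"

definition latin_square :: "grid \<Rightarrow> bool" where
  "latin_square A \<longleftrightarrow>
     (\<forall>i. bij_betw (\<lambda>j. A i j) UNIV {1..5}) \<and>
     (\<forall>j. bij_betw (\<lambda>i. A i j) UNIV {1..5})"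

definition orthogonal :: "grid \<Rightarrow> grid \<Rightarrow> bool" where
  "orthogonal A B \<longleftrightarrow> inj (\<lambda>(i, j). (A i j, B i j))"

definition perfect_sudoku :: "(nat \<Rightarrow> 5 \<times> 5) \<Rightarrow> grid \<Rightarrow> bool" where
  "perfect_sudoku c A \<longleftrightarrow> latin_square A \<and> orthogonal A (palette c)"

definition special_sudoku :: "grid \<Rightarrow> bool" where
  "special_sudoku A \<longleftrightarrow> (\<forall>c. perfect_code c \<longrightarrow> perfect_sudoku c A)"

definition relabel :: "(nat \<Rightarrow> nat) \<Rightarrow> grid \<Rightarrow> grid" where
  "relabel \<sigma> A = (\<lambda>i j. \<sigma> (A i j))"

definition reflect :: "grid \<Rightarrow> grid" where
  "reflect A = (\<lambda>i j. A i (4 - j))"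

end

theory Submission
  imports Defs "HOL-Combinatorics.Permutations"
begin
lemma five_cases: "(x::5) = 0 \<or> x = 1 \<or> x = 2 \<or> x = 3 \<or> x = 4"
proof (cases x)
  case (of_int z)
  then have "z = 0 \<or> z = 1 \<or> z = 2 \<or> z = 3 \<or> z = 4" by auto
  then show ?thesis using of_int by auto
qed
lemma all5: "(\<forall>x::5. P x) \<longleftrightarrow> P 0 \<and> P 1 \<and> P 2 \<and> P 3 \<and> P 4"
  using five_cases by metis
lemma val5_simps: "val5 0 = 0" "val5 1 = 1" "val5 2 = 2" "val5 3 = 3" "val5 4 = 4"
  by (simp_all add: val5_def bit1.Rep_numeral bit1.Rep_0 bit1.Rep_1)
lemma lw: "lee_wt 0 = 0" "lee_wt 1 = 1" "lee_wt 2 = 2" "lee_wt 3 = 2" "lee_wt 4 = 1"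
  by (simp_all add: lee_wt_def val5_simps)
lemma red5: "(5::5) = 0" "(6::5) = 1" "(7::5) = 2" "(8::5) = 3" "(9::5) = 4"
  "(10::5) = 0" "(11::5) = 1" "(12::5) = 2" "(13::5) = 3" "(14::5) = 4"
  "(15::5) = 0" "(16::5) = 1" "(17::5) = 2" "(18::5) = 3" "(19::5) = 4" "(20::5) = 0"
  "(-1::5) = 4" "(-2::5) = 3" "(-3::5) = 2" "(-4::5) = 1"
  by simp_all

lemma lw_tri: "lee_wt (a + b) \<le> lee_wt a + lee_wt b"
  using five_cases[of a] five_cases[of b] by (auto simp: lw red5)
lemma lw_sym: "lee_wt (a - b) = lee_wt (b - a)"
  using five_cases[of a] five_cases[of b] by (auto simp: lw red5)
lemma lw_le1: "lee_wt w \<le> 1 \<longleftrightarrow> w = 0 \<or> w = 1 \<or> w = 4"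
  using five_cases[of w] by (auto simp: lw)
lemma lw_0: "lee_wt w = 0 \<longleftrightarrow> w = 0"
  using five_cases[of w] by (auto simp: lw)

lemma ld_sym: "lee_dist u v = lee_dist v u"
  unfolding lee_dist_def by (simp add: lw_sym[of "fst u" "fst v"] lw_sym[of "snd u" "snd v"])
lemma ld_tri: "lee_dist u w \<le> lee_dist u v + lee_dist v w"
proof -
  have "lee_wt (fst u - fst w) \<le> lee_wt (fst u - fst v) + lee_wt (fst v - fst w)"
    using lw_tri[of "fst u - fst v" "fst v - fst w"] by simp
  moreover have "lee_wt (snd u - snd w) \<le> lee_wt (snd u - snd v) + lee_wt (snd v - snd w)"
    using lw_tri[of "snd u - snd v" "snd v - snd w"] by simp
  ultimately show ?thesis unfolding lee_dist_def by linarith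
qed

lemma dif_iff: "(x::5) - a = c \<longleftrightarrow> x = a + c" by (metis add.commute diff_add_cancel add_diff_cancel_left')

lemma close_iff: "lee_dist (x, y) (a, b) \<le> 1 \<longleftrightarrow>
   (x = a \<and> y = b) \<or> (x = a + 1 \<and> y = b) \<or> (x = a + 4 \<and> y = b) \<or> (x = a \<and> y = b + 1) \<or> (x = a \<and> y = b + 4)" (is "?L \<longleftrightarrow> ?R")
proof -
  have "lee_dist (x, y) (a, b) \<le> 1 \<longleftrightarrow> (lee_wt (x - a) = 0 \<and> lee_wt (y - b) \<le> 1) \<or> (lee_wt (x - a) \<le> 1 \<and> lee_wt (y - b) = 0)"
    unfolding lee_dist_def by auto
  also have "\<dots> \<longleftrightarrow> (x - a = 0 \<and> (y - b = 0 \<or> y - b = 1 \<or> y - b = 4)) \<or> ((x - a = 0 \<or> x - a = 1 \<or> x - a = 4) \<and> y - b = 0)"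
    unfolding lw_le1 lw_0 by (rule refl)
  also have "\<dots> \<longleftrightarrow> ?R" unfolding dif_iff add_0_right by blast
  finally show ?thesis .
qed
lemma pc_unique:
  assumes "perfect_code c" "i \<in> {1..5}" "j \<in> {1..5}" "lee_dist p (c i) \<le> 1" "lee_dist p (c j) \<le> 1"
  shows "i = j"
proof (rule ccontr)
  assume "i \<noteq> j"
  then have "lee_dist (c i) (c j) \<ge> 3" using assms(1-3) unfolding perfect_code_def by blast
  moreover have "lee_dist (c i) (c j) \<le> lee_dist (c i) p + lee_dist p (c j)" by (rule ld_tri)
  moreover have "lee_dist (c i) p \<le> 1" using assms(4) ld_sym by metis
  ultimately show False using assms(5) by linarith
qed

definition ballc :: "5 \<times> 5 \<Rightarrow> (5 \<times> 5) set" where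
  "ballc q = {p. lee_dist p q \<le> 1}"

lemma ballc_eq: "ballc (a, b) = {(a, b), (a + 1, b), (a + 4, b), (a, b + 1), (a, b + 4)}"
proof (rule set_eqI)
  fix p :: "5 \<times> 5"
  obtain x y where p: "p = (x, y)" by fastforce
  show "p \<in> ballc (a, b) \<longleftrightarrow> p \<in> {(a, b), (a + 1, b), (a + 4, b), (a, b + 1), (a, b + 4)}"
    unfolding p ballc_def mem_Collect_eq close_iff by simp
qed

lemma card_ballc: "card (ballc q) = 5"
proof -
  obtain a b where q: "q = (a, b)" by fastforce
  show ?thesis unfolding q ballc_eq by simp
qed

lemma pc_exists:
  assumes "perfect_code c"
  shows "\<exists>i\<in>{1..5}. lee_dist p (c i) \<le> 1"
proof -
  have disj: "\<forall>i\<in>{1..5::nat}. \<forall>j\<in>{1..5}. i \<noteq> j \<longrightarrow> ballc (c i) \<inter> ballc (c j) = {}"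
    using pc_unique[OF assms] unfolding ballc_def by blast
  have "card (\<Union>i\<in>{1..5::nat}. ballc (c i)) = (\<Sum>i\<in>{1..5::nat}. card (ballc (c i)))"
    by (rule card_UN_disjoint) (use disj in auto)
  also have "\<dots> = 25" by (simp add: card_ballc)
  finally have "card (\<Union>i\<in>{1..5::nat}. ballc (c i)) = card (UNIV :: (5 \<times> 5) set)"
    by (simp flip: UNIV_Times_UNIV add: card_cartesian_product)
  then have "(\<Union>i\<in>{1..5::nat}. ballc (c i)) = UNIV"
    by (simp add: card_subset_eq)
  then show ?thesis unfolding ballc_def by blast
qed

lemma palette_iff:
  assumes "perfect_code c" "k \<in> {1..5}"
  shows "palette c x y = k \<longleftrightarrow> lee_dist (x, y) (c k) \<le> 1"
proof -
  have ex1: "\<exists>!i. i \<in> {1..5} \<and> lee_dist (x, y) (c i) \<le> 1"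
    using pc_exists[OF assms(1)] pc_unique[OF assms(1)] by blast
  have "palette c x y \<in> {1..5} \<and> lee_dist (x, y) (c (palette c x y)) \<le> 1"
    unfolding palette_def by (rule theI'[OF ex1])
  then show ?thesis using ex1 assms(2) by blast
qed

lemma palette_in:
  assumes "perfect_code c"
  shows "palette c x y \<in> {1..5} \<and> lee_dist (x, y) (c (palette c x y)) \<le> 1"
proof -
  have ex1: "\<exists>!i. i \<in> {1..5} \<and> lee_dist (x, y) (c i) \<le> 1"
    using pc_exists[OF assms(1)] pc_unique[OF assms(1)] by blast
  show ?thesis unfolding palette_def by (rule theI'[OF ex1])
qed

definition cp :: "5 \<times> 5 \<Rightarrow> nat \<Rightarrow> 5 \<times> 5" where
  "cp q i = (fst q + of_nat i, snd q + 2 * of_nat i)"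

lemma nat5_cases: "i \<in> {1..5::nat} \<Longrightarrow> i = 1 \<or> i = 2 \<or> i = 3 \<or> i = 4 \<or> i = 5" by auto

lemma cp_dist: "lee_dist (cp q i) (cp q j) = lee_wt (of_nat i - of_nat j) + lee_wt (2 * of_nat i - 2 * of_nat j)"
  unfolding cp_def lee_dist_def by simp

lemma cp_perfect: "perfect_code (cp q)"
  unfolding perfect_code_def
proof (intro conjI ballI impI)
  fix i j :: nat assume "i \<in> {1..5}" "j \<in> {1..5}" "i \<noteq> j"
  then show "3 \<le> lee_dist (cp q i) (cp q j)"
    using nat5_cases[of i] nat5_cases[of j] cp_dist[of q i j]
    by (auto simp: lw red5)
next
  show "\<exists>i\<in>{1..5}. \<exists>j\<in>{1..5}. i \<noteq> j \<and> lee_dist (cp q i) (cp q j) = 3"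
    by (rule bexI[of _ 1], rule bexI[of _ 2]) (simp_all add: cp_dist lw red5)
qed

lemma cp5: "cp q 5 = q"
  by (simp add: cp_def red5)
definition cond :: "grid \<Rightarrow> bool" where
  "cond A \<longleftrightarrow> latin_square A \<and> (\<forall>x y. A x y \<noteq> A (x + 1) (y + 1)) \<and> (\<forall>x y. A x y \<noteq> A (x + 1) (y + 4))"

lemma special_cond:
  assumes "special_sudoku A"
  shows "cond A"
proof -
  have lat: "latin_square A"
    using assms cp_perfect unfolding special_sudoku_def perfect_sudoku_def by blast
  have main: "A x y \<noteq> A (x + 1) (y + 1) \<and> A x y \<noteq> A (x + 1) (y + 4)" for x y
  proof -
    let ?q = "(x + 1, y)"
    have ps: "perfect_sudoku (cp ?q) A" using assms cp_perfect unfolding special_sudoku_def by blast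
    then have inj: "inj (\<lambda>(i, j). (A i j, palette (cp ?q) i j))"
      unfolding perfect_sudoku_def orthogonal_def by blast
    have e1: "x = (x + 1) + 4" by (simp add: add.assoc red5)
    have p1: "palette (cp ?q) x y = 5"
      using palette_iff[OF cp_perfect, of 5 "?q" x y] cp5 close_iff e1 by auto
    have p2: "palette (cp ?q) (x + 1) (y + 1) = 5"
      using palette_iff[OF cp_perfect, of 5 "?q" "x + 1" "y + 1"] cp5 close_iff by auto
    have p3: "palette (cp ?q) (x + 1) (y + 4) = 5"
      using palette_iff[OF cp_perfect, of 5 "?q" "x + 1" "y + 4"] cp5 close_iff by auto
    have ne: "(x, y) \<noteq> (x + 1, z)" for z by simp
    show ?thesis
    proof
      show "A x y \<noteq> A (x + 1) (y + 1)"
        using inj p1 p2 ne[of "y + 1"] unfolding inj_def by fastforce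
      show "A x y \<noteq> A (x + 1) (y + 4)"
        using inj p1 p3 ne[of "y + 4"] unfolding inj_def by fastforce
    qed
  qed
  show ?thesis unfolding cond_def using lat main by blast
qed
lemma m2: "(y::5) - 2 * x = y + 3 * x"
proof -
  have "(y::5) + 3 * x - (y - 2 * x) = 5 * x" by (simp add: algebra_simps)
  then show ?thesis by (simp add: red5)
qed
lemma m3: "(y::5) - 3 * x = y + 2 * x"
proof -
  have "(y::5) + 2 * x - (y - 3 * x) = 5 * x" by (simp add: algebra_simps)
  then show ?thesis by (simp add: red5)
qed

lemma sum_cases:
  fixes d0 d1 d2 d3 d4 :: 5
  assumes "d0 = 2 \<or> d0 = 3" "d1 = 2 \<or> d1 = 3" "d2 = 2 \<or> d2 = 3" "d3 = 2 \<or> d3 = 3" "d4 = 2 \<or> d4 = 3"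
    "d0 + d1 + d2 + d3 + d4 = 0"
  shows "(d0 = 2 \<and> d1 = 2 \<and> d2 = 2 \<and> d3 = 2 \<and> d4 = 2) \<or> (d0 = 3 \<and> d1 = 3 \<and> d2 = 3 \<and> d3 = 3 \<and> d4 = 3)"
  using assms by (elim disjE; simp add: red5)
lemma lin:
  fixes g :: "5 \<Rightarrow> 5"
  assumes h: "\<forall>x. g (x + 1) - g x = 2 \<or> g (x + 1) - g x = 3"
  shows "(\<forall>x. g x = g 0 + 2 * x) \<or> (\<forall>x. g x = g 0 + 3 * x)"
proof -
  have e: "(4::5) + 1 = 0" "(3::5) + 1 = 4" "(2::5) + 1 = 3" "(1::5) + 1 = 2" "(0::5) + 1 = 1" by (simp_all add: red5)
  have s: "(g 1 - g 0) + (g 2 - g 1) + (g 3 - g 2) + (g 4 - g 3) + (g 0 - g 4) = 0" by simp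
  have "(\<forall>i\<in>{0,1,2,3::5}. g (i + 1) - g i = 2) \<or> (\<forall>i\<in>{0,1,2,3::5}. g (i + 1) - g i = 3)"
    using sum_cases[OF h[rule_format, of 0] h[rule_format, of 1] h[rule_format, of 2] h[rule_format, of 3]
        h[rule_format, of 4]] e s by (simp add: red5) blast
  then show ?thesis
  proof
    assume "\<forall>i\<in>{0,1,2,3::5}. g (i + 1) - g i = 2"
    then have "g 1 = g 0 + 2" "g 2 = g 1 + 2" "g 3 = g 2 + 2" "g 4 = g 3 + 2"
      using e by (simp_all add: diff_eq_eq add.commute)
    then have "\<forall>x. g x = g 0 + 2 * x" unfolding all5 by (simp add: add.assoc red5)
    then show ?thesis by blast
  next
    assume "\<forall>i\<in>{0,1,2,3::5}. g (i + 1) - g i = 3"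
    then have "g 1 = g 0 + 3" "g 2 = g 1 + 3" "g 3 = g 2 + 3" "g 4 = g 3 + 3"
      using e by (simp_all add: diff_eq_eq add.commute)
    then have "\<forall>x. g x = g 0 + 3 * x" unfolding all5 by (simp add: add.assoc red5)
    then show ?thesis by blast
  qed
qed
lemma latin_row: "latin_square A \<Longrightarrow> bij_betw (A x) UNIV {1..5}"
  unfolding latin_square_def by (metis (no_types) eta_contract_eq)
lemma latin_col: "latin_square A \<Longrightarrow> bij_betw (\<lambda>i. A i y) UNIV {1..5}"
  unfolding latin_square_def by blast

lemma colfun:
  assumes c: "cond A" and k: "k \<in> {1..5}"
  shows "\<exists>f. (\<forall>x y. A x y = k \<longleftrightarrow> y = f x) \<and> ((\<forall>x. f x = f 0 + 2 * x) \<or> (\<forall>x. f x = f 0 + 3 * x))"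
proof -
  have lat: "latin_square A" using c unfolding cond_def by blast
  have ex1: "\<exists>!y. A x y = k" for x
  proof -
    have b: "bij_betw (A x) UNIV {1..5}" by (rule latin_row[OF lat])
    then obtain y where "A x y = k" using k by (metis bij_betw_iff_bijections)
    moreover have "inj (A x)" using b bij_betw_def by blast
    ultimately show ?thesis unfolding inj_def by blast
  qed
  define f where "f x = (THE y. A x y = k)" for x
  have fx: "A x (f x) = k" for x unfolding f_def by (rule theI'[OF ex1])
  have fu: "A x y = k \<Longrightarrow> y = f x" for x y unfolding f_def by (rule the1_equality[OF ex1, symmetric])
  have fc: "\<forall>x y. A x y = k \<longleftrightarrow> y = f x" using fx fu by blast
  have sl: "f (x + 1) - f x = 2 \<or> f (x + 1) - f x = 3" for x
  proof -
    define d where "d = f (x + 1) - f x"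
    have fd: "f (x + 1) = f x + d" unfolding d_def by simp
    have a1: "A x (f x) = k" "A (x + 1) (f x + d) = k" using fx fx[of "x + 1"] fd by auto
    have "d \<noteq> 0"
    proof
      assume "d = 0"
      then have "A (x + 1) (f x) = A x (f x)" using a1 by simp
      moreover have "inj (\<lambda>i. A i (f x))" using latin_col[OF lat] bij_betw_def by blast
      ultimately show False unfolding inj_def by fastforce
    qed
    moreover have "d \<noteq> 1"
    proof
      assume "d = 1"
      moreover have "A x (f x) \<noteq> A (x + 1) (f x + 1)" using c unfolding cond_def by blast
      ultimately show False using a1 by simp
    qed
    moreover have "d \<noteq> 4"
    proof
      assume "d = 4"
      moreover have "A x (f x) \<noteq> A (x + 1) (f x + 4)" using c unfolding cond_def by blast
      ultimately show False using a1 by simp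
    qed
    ultimately have "d = 2 \<or> d = 3" using five_cases[of d] by blast
    then show ?thesis unfolding d_def .
  qed
  have "(\<forall>x. f x = f 0 + 2 * x) \<or> (\<forall>x. f x = f 0 + 3 * x)" by (rule lin) (use sl in blast)
  then show ?thesis using fc by blast
qed

lemma no_mix:
  fixes f h :: "5 \<Rightarrow> 5"
  assumes fk: "\<forall>x y. A x y = k \<longleftrightarrow> y = f x" and hl: "\<forall>x y. A x y = l \<longleftrightarrow> y = h x"
    and f2: "\<forall>x. f x = f 0 + 2 * x" and h3: "\<forall>x. h x = h 0 + 3 * x"
  shows False
proof -
  define x0 where "x0 = f 0 - h 0"
  have "f 0 + 2 * (f 0 - h 0) = h 0 + 3 * (f 0 - h 0)" by (simp add: algebra_simps)
  then have "f x0 = h x0" using f2 h3 x0_def by metis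
  then have "k = l" using fk hl by metis
  then have "f = h" using fk hl by blast
  then have "f 0 + 2 = f 0 + 3" using f2 h3 by (metis mult_1_right)
  then show False by simp
qed

lemma pointwise:
  fixes f :: "5 \<Rightarrow> 5"
  assumes fk: "\<forall>x y. A x y = k \<longleftrightarrow> y = f x" and fs: "\<forall>x. f x = f 0 + s * x" and "A x y = k"
  shows "A 0 (y - s * x) = k"
proof -
  have "y = f 0 + s * x" using assms by metis
  then have "y - s * x = f 0" by simp
  then show ?thesis using fk by metis
qed

definition charf :: "grid \<Rightarrow> nat \<Rightarrow> (5 \<Rightarrow> 5) \<Rightarrow> bool" where
  "charf A k f \<longleftrightarrow> (\<forall>x y. A x y = k \<longleftrightarrow> y = f x)"
definition slope :: "(5 \<Rightarrow> 5) \<Rightarrow> 5 \<Rightarrow> bool" where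
  "slope f s \<longleftrightarrow> (\<forall>x. f x = f 0 + s * x)"

lemma colfun':
  assumes c: "cond A" and k: "k \<in> {1..5}"
  shows "\<exists>f. charf A k f \<and> (slope f 2 \<or> slope f 3)"
  using colfun[OF c k] unfolding charf_def slope_def .

lemma no_mix': "charf A k f \<Longrightarrow> charf A l h \<Longrightarrow> slope f 2 \<Longrightarrow> slope h 3 \<Longrightarrow> False"
  unfolding charf_def slope_def by (rule no_mix)

lemma pointwise': "charf A k f \<Longrightarrow> slope f s \<Longrightarrow> A x y = k \<Longrightarrow> A 0 (y - s * x) = k"
  unfolding charf_def slope_def by (rule pointwise)

lemma cond_pat:
  assumes c: "cond A"
  shows "(\<forall>x y. A x y = A 0 (y + 3 * x)) \<or> (\<forall>x y. A x y = A 0 (y + 2 * x))"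
proof -
  have lat: "latin_square A" using c unfolding cond_def by blast
  have rng: "A x y \<in> {1..5}" for x y by (rule bij_betw_apply[OF latin_row[OF lat]]) simp
  show ?thesis
  proof (cases "\<exists>k\<in>{1..5}. \<exists>f. charf A k f \<and> slope f 2")
    case True
    then obtain k0 f0 where f0: "charf A k0 f0" "slope f0 2" by blast
    have "A x y = A 0 (y + 3 * x)" for x y
    proof -
      obtain f where f: "charf A (A x y) f" "slope f 2 \<or> slope f 3"
        using colfun'[OF c rng[of x y]] by blast
      have "slope f 2" using f no_mix'[OF f0(1) f(1) f0(2)] by blast
      then have "A 0 (y - 2 * x) = A x y" by (rule pointwise'[OF f(1)]) (rule refl)
      then show ?thesis by (simp add: m2)
    qed
    then show ?thesis by blast
  next
    case False
    have "A x y = A 0 (y + 2 * x)" for x y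
    proof -
      obtain f where f: "charf A (A x y) f" "slope f 2 \<or> slope f 3"
        using colfun'[OF c rng[of x y]] by blast
      have "slope f 3" using f False rng[of x y] by blast
      then have "A 0 (y - 3 * x) = A x y" by (rule pointwise'[OF f(1)]) (rule refl)
      then show ?thesis by (simp add: m3)
    qed
    then show ?thesis by blast
  qed
qed
definition pat :: "(5 \<Rightarrow> nat) \<Rightarrow> 5 \<Rightarrow> grid" where
  "pat g b = (\<lambda>x y. g (y + b * x))"

definition offs :: "(5 \<times> 5) set" where
  "offs = {(0, 0), (1, 0), (4, 0), (0, 1), (0, 4)}"

lemma close_off: "lee_dist (x, y) (a, b) \<le> 1 \<longleftrightarrow> (x - a, y - b) \<in> offs"
  unfolding close_iff offs_def by (simp add: dif_iff)

lemma offs_inj: "b \<in> {2, 3} \<Longrightarrow> p \<in> offs \<Longrightarrow> q \<in> offs \<Longrightarrow> snd p + b * fst p = snd q + b * fst q \<Longrightarrow> p = q"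
  unfolding offs_def by (auto simp: red5)

lemma bij_aff:
  fixes b b' j :: 5
  assumes "b * b' = 1"
  shows "bij (\<lambda>i. j + b * i)"
proof (rule bij_betwI[where g = "\<lambda>z. b' * (z - j)"])
  show "(\<lambda>i. j + b * i) \<in> UNIV \<rightarrow> UNIV" "(\<lambda>z. b' * (z - j)) \<in> UNIV \<rightarrow> UNIV" by auto
  have bb: "b' * b = 1" using assms by (simp add: mult.commute)
  show "b' * (j + b * x - j) = x" for x
    by (simp add: mult.assoc[symmetric] bb)
  show "j + b * (b' * (y - j)) = y" for y
    by (simp add: mult.assoc[symmetric] assms)
qed

lemma pat_latin:
  assumes g: "bij_betw g UNIV {1..5}" and b: "b \<in> {2, 3}"
  shows "latin_square (pat g b)"
  unfolding latin_square_def
proof (intro allI conjI)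
  fix i
  have "bij (\<lambda>j. j + b * i)"
    by (rule bij_betwI[where g = "\<lambda>z. z - b * i"]) auto
  then have "bij_betw (g \<circ> (\<lambda>j. j + b * i)) UNIV {1..5}" using g by (rule bij_betw_trans)
  then show "bij_betw (\<lambda>j. pat g b i j) UNIV {1..5}" unfolding pat_def comp_def .
next
  fix j
  have "\<exists>b'. b * b' = 1"
  proof (cases "b = 2")
    case True
    then show ?thesis by (intro exI[of _ 3]) (simp add: red5)
  next
    case False
    then have "b = 3" using b by simp
    then show ?thesis by (intro exI[of _ 2]) (simp add: red5)
  qed
  then obtain b' where "b * b' = 1" by blast
  then have "bij (\<lambda>i. j + b * i)" by (rule bij_aff)
  then have "bij_betw (g \<circ> (\<lambda>i. j + b * i)) UNIV {1..5}" using g by (rule bij_betw_trans)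
  then show "bij_betw (\<lambda>i. pat g b i j) UNIV {1..5}" unfolding pat_def comp_def .
qed

lemma pat_orth:
  assumes c: "perfect_code c" and g: "bij_betw g UNIV {1..5}" and b: "b \<in> {2, 3}"
  shows "orthogonal (pat g b) (palette c)"
  unfolding orthogonal_def
proof (rule injI)
  fix p q :: "5 \<times> 5"
  assume eq: "(case p of (i, j) \<Rightarrow> (pat g b i j, palette c i j)) = (case q of (i, j) \<Rightarrow> (pat g b i j, palette c i j))"
  obtain x y where p: "p = (x, y)" by fastforce
  obtain x' y' where q: "q = (x', y')" by fastforce
  have e1: "g (y + b * x) = g (y' + b * x')" and e2: "palette c x y = palette c x' y'"
    using eq unfolding p q pat_def by auto
  have inj: "inj g" using g bij_betw_def by blast
  have e3: "y + b * x = y' + b * x'" using e1 inj unfolding inj_def by blast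
  define k where "k = palette c x y"
  have k: "k \<in> {1..5}" "lee_dist (x, y) (c k) \<le> 1" using palette_in[OF c] k_def by blast+
  have k': "lee_dist (x', y') (c k) \<le> 1" using palette_in[OF c, of x' y'] e2 k_def by simp
  obtain a0 b0 where ck: "c k = (a0, b0)" by fastforce
  have o1: "(x - a0, y - b0) \<in> offs" using k(2) ck close_off by simp
  have o2: "(x' - a0, y' - b0) \<in> offs" using k' ck close_off by simp
  have "(y - b0) + b * (x - a0) = (y' - b0) + b * (x' - a0)"
    using e3 by (simp add: algebra_simps)
  then have "(x - a0, y - b0) = (x' - a0, y' - b0)"
    using offs_inj[OF b o1 o2] by simp
  then show "p = q" unfolding p q by simp
qed

lemma pat_special:
  assumes g: "bij_betw g UNIV {1..5}" and b: "b \<in> {2, 3}"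
  shows "special_sudoku (pat g b)"
  unfolding special_sudoku_def perfect_sudoku_def
  using pat_latin[OF g b] pat_orth[OF _ g b] by blast

lemma special_pat:
  assumes "special_sudoku A"
  shows "\<exists>g. bij_betw g UNIV {1..5} \<and> (A = pat g 3 \<or> A = pat g 2)"
proof -
  have c: "cond A" by (rule special_cond[OF assms])
  have "bij_betw (A 0) UNIV {1..5}" using c latin_row unfolding cond_def by blast
  moreover have "A = pat (A 0) 3 \<or> A = pat (A 0) 2"
    using cond_pat[OF c] unfolding pat_def by (auto intro!: ext)
  ultimately show ?thesis by blast
qed
definition g0 :: "5 \<Rightarrow> nat" where "g0 z = val5 z + 1"
definition h0 :: "nat \<Rightarrow> 5" where "h0 n = of_nat (n - 1)"

lemma h0g0: "h0 (g0 z) = z"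
  using five_cases[of z] by (auto simp: h0_def g0_def val5_simps)
lemma g0h0: "n \<in> {1..5} \<Longrightarrow> g0 (h0 n) = n"
  using nat5_cases[of n] by (auto simp: h0_def g0_def val5_simps red5)
lemma g0_range: "g0 z \<in> {1..5}"
  using five_cases[of z] by (auto simp: g0_def val5_simps)

lemma g0_fun: "g0 \<in> UNIV \<rightarrow> {1..5}" using g0_range by blast
lemma bij_g0: "bij_betw g0 UNIV {1..5}"
  by (rule bij_betwI[where g = h0, OF g0_fun]) (auto simp: h0g0 g0h0)
lemma bij_h0: "bij_betw h0 {1..5} UNIV"
  by (rule bij_betwI[where g = g0, OF _ g0_fun]) (auto simp: h0g0 g0h0)

definition G5 :: "(5 \<Rightarrow> nat) set" where "G5 = {g. bij_betw g UNIV {1..5}}"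

lemma G5_eq: "G5 = (\<lambda>p. g0 \<circ> p) ` {p. p permutes (UNIV :: 5 set)}"
proof (rule set_eqI, rule iffI)
  fix g assume "g \<in> G5"
  then have g: "bij_betw g UNIV {1..5}" unfolding G5_def by blast
  have "bij (h0 \<circ> g)" using bij_betw_trans[OF g bij_h0] .
  then have "h0 \<circ> g permutes UNIV" by (simp add: permutes_univ bij_iff)
  moreover have "g = g0 \<circ> (h0 \<circ> g)"
  proof
    fix z show "g z = (g0 \<circ> (h0 \<circ> g)) z" using g0h0[OF bij_betw_apply[OF g]] by simp
  qed
  ultimately show "g \<in> (\<lambda>p. g0 \<circ> p) ` {p. p permutes UNIV}" by blast
next
  fix g assume "g \<in> (\<lambda>p. g0 \<circ> p) ` {p. p permutes (UNIV :: 5 set)}"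
  then obtain p where p: "p permutes UNIV" "g = g0 \<circ> p" by blast
  have "bij p" using p(1) by (simp add: permutes_univ bij_iff)
  then have "bij_betw (g0 \<circ> p) UNIV {1..5}" using bij_g0 by (rule bij_betw_trans)
  then show "g \<in> G5" unfolding G5_def using p(2) by simp
qed

lemma inj_g0: "inj_on (\<lambda>p. g0 \<circ> p) X"
proof (rule inj_onI)
  fix p q assume "g0 \<circ> p = g0 \<circ> q"
  moreover have "inj g0" using bij_g0 bij_betw_def by blast
  ultimately show "p = q" by (metis fun.inj_map_strong inj_eq)
qed

lemma card_G5: "card G5 = 120" and fin_G5: "finite G5"
proof -
  have "card {p. p permutes (UNIV :: 5 set)} = fact 5"
    by (rule card_permutations) simp_all
  then show "card G5 = 120" unfolding G5_eq by (simp add: card_image[OF inj_g0] fact_numeral)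
  show "finite G5" unfolding G5_eq by (rule finite_imageI, rule finite_permutations) simp
qed

lemma pat_inj: "inj_on (\<lambda>g. pat g b) X"
proof (rule inj_onI)
  fix g g' assume "pat g b = pat g' b"
  then have "pat g b 0 z = pat g' b 0 z" for z by simp
  then show "g = g'" unfolding pat_def by (auto intro!: ext)
qed

lemma pat_disj: "g' \<in> G5 \<Longrightarrow> pat g 3 \<noteq> pat g' 2"
proof
  assume g': "g' \<in> G5" and e: "pat g 3 = pat g' 2"
  then have "pat g 3 0 z = pat g' 2 0 z" for z by simp
  then have gg: "g = g'" unfolding pat_def by (auto intro!: ext)
  have "pat g 3 1 0 = pat g' 2 1 0" using e by simp
  then have "g' 3 = g' 2" unfolding pat_def gg by simp
  moreover have "inj g'" using g' unfolding G5_def bij_betw_def by blast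
  moreover have "(3::5) \<noteq> 2" by simp
  ultimately show False unfolding inj_def by blast
qed

lemma special_set: "{A. special_sudoku A} = (\<lambda>g. pat g 3) ` G5 \<union> (\<lambda>g. pat g 2) ` G5"
  using special_pat pat_special unfolding G5_def by blast

theorem mainTheorem7:
  shows "card {A. special_sudoku A} = 240 \<and>
    (\<exists>S0. special_sudoku S0 \<and>
       (\<forall>A. special_sudoku A \<longrightarrow>
          (\<exists>\<sigma>. bij_betw \<sigma> {1..5} {1..5} \<and>
                (A = relabel \<sigma> S0 \<or> A = relabel \<sigma> (reflect S0)))))"
proof
  have "card ((\<lambda>g. pat g 3) ` G5 \<union> (\<lambda>g. pat g 2) ` G5) = card ((\<lambda>g. pat g 3) ` G5) + card ((\<lambda>g. pat g 2) ` G5)"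
    by (rule card_Un_disjoint) (use fin_G5 pat_disj in auto)
  also have "\<dots> = 240" by (simp add: card_image[OF pat_inj] card_G5)
  finally show "card {A. special_sudoku A} = 240" unfolding special_set .
next
  show "\<exists>S0. special_sudoku S0 \<and>
       (\<forall>A. special_sudoku A \<longrightarrow>
          (\<exists>\<sigma>. bij_betw \<sigma> {1..5} {1..5} \<and>
                (A = relabel \<sigma> S0 \<or> A = relabel \<sigma> (reflect S0))))"
  proof (rule exI[of _ "pat g0 3"], intro conjI allI impI)
    show "special_sudoku (pat g0 3)" by (rule pat_special[OF bij_g0]) simp
    fix A assume "special_sudoku A"
    then obtain g where g: "bij_betw g UNIV {1..5}" and A: "A = pat g 3 \<or> A = pat g 2"
      using special_pat by blast
    from A show "\<exists>\<sigma>. bij_betw \<sigma> {1..5} {1..5} \<and> (A = relabel \<sigma> (pat g0 3) \<or> A = relabel \<sigma> (reflect (pat g0 3)))"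
    proof
      assume A3: "A = pat g 3"
      have "bij_betw (g \<circ> h0) {1..5} {1..5}" by (rule bij_betw_trans[OF bij_h0 g])
      moreover have "A = relabel (g \<circ> h0) (pat g0 3)"
        unfolding A3 relabel_def pat_def by (simp add: h0g0)
      ultimately show ?thesis by blast
    next
      assume A2: "A = pat g 2"
      have r: "bij (\<lambda>z::5. 4 - z)" by (rule bij_betwI[where g = "\<lambda>z. 4 - z"]) auto
      have "bij_betw (g \<circ> (\<lambda>z. 4 - z) \<circ> h0) {1..5} {1..5}"
        by (rule bij_betw_trans[OF bij_h0 bij_betw_trans[OF r g]])
      moreover have "A = relabel (g \<circ> (\<lambda>z. 4 - z) \<circ> h0) (reflect (pat g0 3))"
        unfolding A2 relabel_def pat_def reflect_def by (simp add: h0g0 m3[symmetric])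
      ultimately show ?thesis by blast
    qed
  qed
qed
end
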